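(* Let $f_1,\dots,f_n$ be convex and differentiable with $\|\nabla f_i(x)-\nabla f_i(y)\|\le L\|x-y\|$, $f=\frac1n\sum_if_i$. Fix $x,\tilde x\in\mathbb{R}^d$, integers $N,B\ge1$, $b\ge2$ and $\lambda\in(0,1]$. For each worker $i=1,\dots,N$ draw $B$ indices independently and uniformly from $\{1,\dots,n\}$ (independently across workers), forming $I^i$, let $u^i=\frac1B\sum_{a\in I^i}[\nabla f_a(x)-\nabla f_a(\tilde x)]$, $\delta^i=\frac{\lambda\|u^i\|_\infty}{2^{b-1}-1}$, and $v=\frac1N\sum_{i=1}^NQ_{(\delta^i,b)}(u^i)+\nabla f(\tilde x)$ (quantization roundings independent given the indices). Let $d_\lambda\ge0$ be such that almost surely, for each $i$, the number of coordinates of $u^i$ outside $[-2^{b-1}\delta^i,(2^{b-1}-1)\delta^i]$ is at most $d_\lambda$. Let $\zeta=\frac{d\lambda^2}{4(2^{b-1}-1)^2}+d_\lambda(1-\lambda)^2+\frac{1}{NB}$. Then $$\mathbf{E}\|v-\nabla f(x)\|^2\le 4L\zeta\,\big[f(\tilde x)-f(x)-\langle\nabla f(x),\tilde x-x\rangle\big].$$ Moreover, if $J$ is a further multiset of $B$ indices drawn independently and uniformly from $\{1,\dots,n\}$, independently of everything else, and $\hat v=\frac1B\sum_{j\in J}[\nabla f_j(x)-\nabla f_j(\tilde x)]+\nabla f(\tilde x)$, then $$\mathbf{E}\|\hat v-v\|^2\le 4L\Big[\frac{1}{2B}+\frac{d\lambda^2}{4(2^{b-1}-1)^2}+d_\lambda(1-\lambda)^2+\frac{1}{NB}\Big]\big[f(\tilde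 x)-f(x)-\langle\nabla f(x),\tilde x-x\rangle\big].$$
   Context: Quantization: for an integer $b\ge2$ and $\delta>0$, $\mathrm{dom}(\delta,b)=\{k\delta:k\in\mathbb{Z},-2^{b-1}\le k\le 2^{b-1}-1\}$; the scalar quantizer $Q_{(\delta,b)}(y)$, for $y\in[-2^{b-1}\delta,(2^{b-1}-1)\delta]$ with $z$ the largest grid point $\le y$, equals $z$ with probability $\frac{z+\delta-y}{\delta}$ and $z+\delta$ otherwise; for $y$ outside this interval it equals the nearest grid point. On vectors it acts coordinatewise with independent randomness; if $\delta=0$ (only when the vector is $0$) the output is $0$. $\|\cdot\|_\infty$ is the max norm. *)

theory Defs
  imports "HOL-Analysis.Analysis" "HOL-Probability.Probability"
begin

definition linf_norm :: "real^'d \<Rightarrow> real" where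
  "linf_norm u = Max (range (\<lambda>j. \<bar>u $ j\<bar>))"

definition quant_scalar :: "real \<Rightarrow> nat \<Rightarrow> real \<Rightarrow> real pmf" where
  "quant_scalar \<delta> b y =
     (if \<delta> = 0 then return_pmf 0
      else if y < - (2 ^ (b - 1)) * \<delta> then return_pmf (- (2 ^ (b - 1)) * \<delta>)
      else if y > (2 ^ (b - 1) - 1) * \<delta> then return_pmf ((2 ^ (b - 1) - 1) * \<delta>)
      else (let z = \<delta> * of_int \<lfloor>y / \<delta>\<rfloor> in
            map_pmf (\<lambda>c. if c then z else z + \<delta>) (bernoulli_pmf ((z + \<delta> - y) / \<delta>))))"

definition quant_vec :: "real \<Rightarrow> nat \<Rightarrow> real^'d \<Rightarrow> (real^'d) pmf" where
  "quant_vec \<delta> b u = map_pmf (\<lambda>q. \<chi> j. q j) (Pi_pmf UNIV 0 (\<lambda>j. quant_scalar \<delta> b (u $ j)))"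

definition idx_pmf :: "nat \<Rightarrow> nat \<Rightarrow> nat \<Rightarrow> (nat \<times> nat \<Rightarrow> nat) pmf" where
  "idx_pmf n N B = Pi_pmf ({..<N} \<times> {..<B}) 0 (\<lambda>_. pmf_of_set {..<n})"

definition batch_pmf :: "nat \<Rightarrow> nat \<Rightarrow> (nat \<Rightarrow> nat) pmf" where
  "batch_pmf n B = Pi_pmf {..<B} 0 (\<lambda>_. pmf_of_set {..<n})"

definition worker_u :: "(nat \<Rightarrow> real^'d \<Rightarrow> real^'d) \<Rightarrow> nat \<Rightarrow> real^'d \<Rightarrow> real^'d
    \<Rightarrow> (nat \<times> nat \<Rightarrow> nat) \<Rightarrow> nat \<Rightarrow> real^'d" where
  "worker_u g B x xt I i = (1 / real B) *\<^sub>R (\<Sum>a<B. g (I (i, a)) x - g (I (i, a)) xt)"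

definition worker_delta :: "real \<Rightarrow> nat \<Rightarrow> real^'d \<Rightarrow> real" where
  "worker_delta lam b u = lam * linf_norm u / (2 ^ (b - 1) - 1)"

definition v_pmf :: "(nat \<Rightarrow> real^'d \<Rightarrow> real^'d) \<Rightarrow> nat \<Rightarrow> nat \<Rightarrow> nat \<Rightarrow> nat \<Rightarrow> real
    \<Rightarrow> real^'d \<Rightarrow> real^'d \<Rightarrow> (real^'d) pmf" where
  "v_pmf g n N B b lam x xt =
     bind_pmf (idx_pmf n N B) (\<lambda>I.
       map_pmf (\<lambda>q. (1 / real N) *\<^sub>R (\<Sum>i<N. q i) + (1 / real n) *\<^sub>R (\<Sum>a<n. g a xt))
         (Pi_pmf {..<N} 0 (\<lambda>i. quant_vec (worker_delta lam b (worker_u g B x xt I i)) b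
                                          (worker_u g B x xt I i))))"

definition vhat :: "(nat \<Rightarrow> real^'d \<Rightarrow> real^'d) \<Rightarrow> nat \<Rightarrow> nat \<Rightarrow> real^'d \<Rightarrow> real^'d
    \<Rightarrow> (nat \<Rightarrow> nat) \<Rightarrow> real^'d" where
  "vhat g n B x xt J = (1 / real B) *\<^sub>R (\<Sum>a<B. g (J a) x - g (J a) xt)
                       + (1 / real n) *\<^sub>R (\<Sum>a<n. g a xt)"

end

theory Submission
  imports Defs
begin


lemma line_deriv:
  fixes f :: "'v::real_inner \<Rightarrow> real"
  assumes grad: "\<And>y. (f has_derivative (\<lambda>h. g y \<bullet> h)) (at y)"
  shows "((\<lambda>t. f (y + t *\<^sub>R w)) has_real_derivative (g (y + t *\<^sub>R w) \<bullet> w)) (at t)"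
proof -
  have 1: "((\<lambda>t. y + t *\<^sub>R w) has_derivative (\<lambda>s. s *\<^sub>R w)) (at t)"
    by (auto intro!: derivative_eq_intros)
  have "((\<lambda>t. f (y + t *\<^sub>R w)) has_derivative (\<lambda>s. g (y + t *\<^sub>R w) \<bullet> (s *\<^sub>R w))) (at t)"
    using has_derivative_compose[OF 1 grad] by (simp add: o_def)
  moreover have "(\<lambda>s. g (y + t *\<^sub>R w) \<bullet> (s *\<^sub>R w)) = (*) (g (y + t *\<^sub>R w) \<bullet> w)"
    by (auto simp: mult.commute)
  ultimately show ?thesis by (simp add: has_field_derivative_def)
qed

lemma tangent:
  fixes f :: "'v::real_inner \<Rightarrow> real"
  assumes cvx: "convex_on UNIV f"
    and grad: "\<And>y. (f has_derivative (\<lambda>h. g y \<bullet> h)) (at y)"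
  shows "f z \<ge> f y + g y \<bullet> (z - y)"
proof -
  define w where "w = z - y"
  define h where "h = (\<lambda>t::real. f (y + t *\<^sub>R w))"
  have hc: "convex_on UNIV h"
  proof (rule convex_onI)
    fix t x1 x2 :: real assume t: "0 < t" "t < 1"
    have "h ((1 - t) *\<^sub>R x1 + t *\<^sub>R x2) = f ((1 - t) *\<^sub>R (y + x1 *\<^sub>R w) + t *\<^sub>R (y + x2 *\<^sub>R w))"
      unfolding h_def by (simp add: algebra_simps)
    also have "\<dots> \<le> (1 - t) * f (y + x1 *\<^sub>R w) + t * f (y + x2 *\<^sub>R w)"
      using convex_onD[OF cvx, of t] t by simp
    finally show "h ((1 - t) *\<^sub>R x1 + t *\<^sub>R x2) \<le> (1 - t) * h x1 + t * h x2" by (simp add: h_def)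
  qed simp
  have d: "(h has_field_derivative (g y \<bullet> w)) (at 0 within UNIV)"
    using line_deriv[OF grad, of y w 0] by (simp add: h_def)
  have "h 1 - h 0 \<ge> (g y \<bullet> w) * (1 - 0)"
    by (rule convex_on_imp_above_tangent[OF hc _ _ _ d]) auto
  thus ?thesis by (simp add: h_def w_def)
qed

lemma descent:
  fixes f :: "'v::real_inner \<Rightarrow> real"
  assumes grad: "\<And>y. (f has_derivative (\<lambda>h. g y \<bullet> h)) (at y)"
    and lip: "\<And>y z. norm (g y - g z) \<le> L * norm (y - z)"
  shows "f z \<le> f y + g y \<bullet> (z - y) + L / 2 * (norm (z - y))\<^sup>2"
proof -
  define w where "w = z - y"
  define h where "h = (\<lambda>t::real. f (y + t *\<^sub>R w) - t * (g y \<bullet> w) - t\<^sup>2 * (L / 2 * (norm w)\<^sup>2))"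
  have "h 0 \<ge> h 1"
  proof (rule DERIV_nonpos_imp_nonincreasing[of 0 1 h])
    fix t :: real assume t: "0 \<le> t" "t \<le> 1"
    have D: "(h has_real_derivative (g (y + t *\<^sub>R w) \<bullet> w - g y \<bullet> w - 2 * t * (L / 2 * (norm w)\<^sup>2))) (at t)"
      unfolding h_def
      by (rule derivative_eq_intros line_deriv[OF grad] refl | simp)+
    have "g (y + t *\<^sub>R w) \<bullet> w - g y \<bullet> w = (g (y + t *\<^sub>R w) - g y) \<bullet> w" by (simp add: inner_diff_left)
    also have "\<dots> \<le> norm (g (y + t *\<^sub>R w) - g y) * norm w" by (rule norm_cauchy_schwarz)
    also have "\<dots> \<le> (L * norm (t *\<^sub>R w)) * norm w"
      using lip[of "y + t *\<^sub>R w" y] by (intro mult_right_mono) auto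
    also have "\<dots> = 2 * t * (L / 2 * (norm w)\<^sup>2)" using t by (simp add: power2_eq_square)
    finally show "\<exists>d. (h has_real_derivative d) (at t) \<and> d \<le> 0" using D by (intro exI[of _ _]) auto
  qed simp
  thus ?thesis by (simp add: h_def w_def)
qed

lemma cocoercive:
  fixes f :: "'v::real_inner \<Rightarrow> real"
  assumes cvx: "convex_on UNIV f"
    and grad: "\<And>y. (f has_derivative (\<lambda>h. g y \<bullet> h)) (at y)"
    and lip: "\<And>y z. norm (g y - g z) \<le> L * norm (y - z)"
  shows "(norm (g x - g xt))\<^sup>2 \<le> 2 * L * (f xt - f x - g x \<bullet> (xt - x))"
proof -
  define G where "G = g xt - g x"
  show ?thesis
  proof (cases "L \<le> 0")
    case True
    have l: "norm (g x - g xt) \<le> L * norm (x - xt)" by (rule lip)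
    have "L * norm (x - xt) \<le> 0" using True by (simp add: mult_nonpos_nonneg)
    with l have "norm (g x - g xt) = 0" by (smt (verit) norm_ge_zero)
    then have gx: "g x = g xt" by simp
    have "L = 0 \<or> x = xt"
    proof (rule ccontr)
      assume "\<not> (L = 0 \<or> x = xt)"
      then have "L * norm (x - xt) < 0" using True by (simp add: mult_neg_pos)
      with l show False by (smt (verit) norm_ge_zero)
    qed
    then show ?thesis using gx by auto
  next
    case False
    then have Lp: "L > 0" by simp
    define u where "u = xt - (1 / L) *\<^sub>R G"
    have t: "f u \<ge> f x + g x \<bullet> (u - x)" by (rule tangent[OF cvx grad])
    have d: "f u \<le> f xt + g xt \<bullet> (u - xt) + L / 2 * (norm (u - xt))\<^sup>2"
      by (rule descent[OF grad lip])
    have e1: "u - xt = - (1 / L) *\<^sub>R G" by (simp add: u_def)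
    have "f x + g x \<bullet> (u - x) \<le> f xt + g xt \<bullet> (u - xt) + L / 2 * (norm (u - xt))\<^sup>2"
      using t d by linarith
    hence "0 \<le> f xt - f x - g x \<bullet> (xt - x) + (g xt - g x) \<bullet> (u - xt) + L / 2 * (norm (u - xt))\<^sup>2"
      by (simp add: inner_diff_right inner_diff_left algebra_simps)
    also have "(g xt - g x) \<bullet> (u - xt) = - (1 / L) * (norm G)\<^sup>2"
      unfolding e1 G_def by (simp add: power2_norm_eq_inner)
    also have "L / 2 * (norm (u - xt))\<^sup>2 = (1 / (2 * L)) * (norm G)\<^sup>2"
      unfolding e1 using Lp by (simp add: power2_eq_square field_simps)
    finally have "(norm G)\<^sup>2 / (2 * L) \<le> f xt - f x - g x \<bullet> (xt - x)"
      using Lp by (simp add: field_simps)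
    then show ?thesis using Lp by (simp add: G_def norm_minus_commute field_simps)
  qed
qed



lemma fin_Pi:
  assumes "finite A" "\<And>k. k \<in> A \<Longrightarrow> finite (set_pmf (P k))"
  shows "finite (set_pmf (Pi_pmf A d P))"
  using assms by (simp add: set_Pi_pmf finite_PiE_dflt)

lemma exp_bind:
  fixes h :: "'b \<Rightarrow> 'c::{banach, second_countable_topology}"
  assumes "finite (set_pmf p)" "\<And>a. a \<in> set_pmf p \<Longrightarrow> finite (set_pmf (f a))"
  shows "measure_pmf.expectation (bind_pmf p f) h = measure_pmf.expectation p (\<lambda>a. measure_pmf.expectation (f a) h)"
  apply (subst pmf_expectation_bind[of "set_pmf p"])
  using assms apply auto[3]
  apply (subst integral_measure_pmf[of "set_pmf p"])
  using assms by auto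

lemma exp_pair:
  fixes h :: "'a \<times> 'b \<Rightarrow> 'c::{banach, second_countable_topology}"
  assumes "finite (set_pmf p)" "finite (set_pmf q)"
  shows "measure_pmf.expectation (pair_pmf p q) h = measure_pmf.expectation p (\<lambda>a. measure_pmf.expectation q (\<lambda>b. h (a, b)))"
  unfolding pair_pmf_def using assms
  by (simp add: exp_bind)

lemma exp_component:
  fixes h :: "'b \<Rightarrow> 'c::{banach, second_countable_topology}"
  assumes "finite A" "i \<in> A"
  shows "measure_pmf.expectation (Pi_pmf A d P) (\<lambda>\<omega>. h (\<omega> i)) = measure_pmf.expectation (P i) h"
proof -
  have "measure_pmf.expectation (map_pmf (\<lambda>f. f i) (Pi_pmf A d P)) h = measure_pmf.expectation (Pi_pmf A d P) (\<lambda>\<omega>. h (\<omega> i))"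
    by simp
  moreover have "map_pmf (\<lambda>f. f i) (Pi_pmf A d P) = P i" using Pi_pmf_component[OF assms(1), of i d P] assms(2) by simp
  ultimately show ?thesis by simp
qed

lemma exp_mono:
  fixes f g :: "'a \<Rightarrow> real"
  assumes "finite (set_pmf p)" "\<And>x. x \<in> set_pmf p \<Longrightarrow> f x \<le> g x"
  shows "measure_pmf.expectation p f \<le> measure_pmf.expectation p g"
  using assms by (intro integral_mono_AE integrable_measure_pmf_finite AE_pmfI) auto

lemma norm_add_sq: "(norm (a + b :: 'v::real_inner))\<^sup>2 = (norm a)\<^sup>2 + 2 * (a \<bullet> b) + (norm b)\<^sup>2"
  by (simp add: power2_norm_eq_inner inner_add_left inner_add_right inner_commute)

lemma norm_diff_sq: "(norm (a - b :: 'v::real_inner))\<^sup>2 = (norm a)\<^sup>2 - 2 * (a \<bullet> b) + (norm b)\<^sup>2"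
  by (simp add: power2_norm_eq_inner inner_diff_left inner_diff_right inner_commute)

lemma indep_sum:
  fixes h :: "'a \<Rightarrow> 'b \<Rightarrow> 'v::euclidean_space"
  assumes "finite A" "\<And>k. k \<in> A \<Longrightarrow> finite (set_pmf (P k))"
    "\<And>k. k \<in> A \<Longrightarrow> measure_pmf.expectation (P k) (h k) = 0"
  shows "measure_pmf.expectation (Pi_pmf A d P) (\<lambda>\<omega>. (norm (\<Sum>k\<in>A. h k (\<omega> k)))\<^sup>2)
       = (\<Sum>k\<in>A. measure_pmf.expectation (P k) (\<lambda>y. (norm (h k y))\<^sup>2))"
  using assms
proof (induction A rule: finite_induct)
  case empty
  then show ?case by simp
next
  case (insert x F)
  let ?S = "\<lambda>\<omega>. \<Sum>k\<in>F. h k (\<omega> k)"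
  have finF: "finite (set_pmf (Pi_pmf F d P))" using insert by (intro fin_Pi) auto
  have finx: "finite (set_pmf (P x))" using insert by auto
  have eq: "\<And>y w. (\<Sum>k\<in>insert x F. h k ((w(x := y)) k)) = h x y + ?S w"
    using insert.hyps by (simp add: sum.insert) (intro sum.cong, auto)
  have eq2: "\<And>a w. (\<Sum>k\<in>F. h k (if k = x then a else w k)) = ?S w"
    using insert.hyps by (intro sum.cong) auto
  have "measure_pmf.expectation (Pi_pmf (insert x F) d P) (\<lambda>\<omega>. (norm (\<Sum>k\<in>insert x F. h k (\<omega> k)))\<^sup>2)
      = measure_pmf.expectation (pair_pmf (P x) (Pi_pmf F d P)) (\<lambda>(y, \<omega>). (norm (h x y + ?S \<omega>))\<^sup>2)"
    using insert.hyps by (simp add: Pi_pmf_insert case_prod_unfold eq2)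
  also have "\<dots> = measure_pmf.expectation (P x) (\<lambda>y. measure_pmf.expectation (Pi_pmf F d P)
                     (\<lambda>\<omega>. (norm (h x y))\<^sup>2 + 2 * (h x y \<bullet> ?S \<omega>) + (norm (?S \<omega>))\<^sup>2))"
    by (simp add: exp_pair finF finx norm_add_sq)
  also have "\<dots> = measure_pmf.expectation (P x) (\<lambda>y. (norm (h x y))\<^sup>2 + 2 * (h x y \<bullet> measure_pmf.expectation (Pi_pmf F d P) ?S)
                     + measure_pmf.expectation (Pi_pmf F d P) (\<lambda>\<omega>. (norm (?S \<omega>))\<^sup>2))"
    by (intro Bochner_Integration.integral_cong refl,
        simp add: Bochner_Integration.integral_add integrable_measure_pmf_finite[OF finF])
  also have "\<dots> = measure_pmf.expectation (P x) (\<lambda>y. (norm (h x y))\<^sup>2) + 2 * (measure_pmf.expectation (P x) (h x) \<bullet> measure_pmf.expectation (Pi_pmf F d P) ?S)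
                     + measure_pmf.expectation (Pi_pmf F d P) (\<lambda>\<omega>. (norm (?S \<omega>))\<^sup>2)"
    by (simp add: Bochner_Integration.integral_add integrable_measure_pmf_finite[OF finx])
  also have "\<dots> = measure_pmf.expectation (P x) (\<lambda>y. (norm (h x y))\<^sup>2)
                     + (\<Sum>k\<in>F. measure_pmf.expectation (P k) (\<lambda>y. (norm (h k y))\<^sup>2))"
    using insert by simp
  finally show ?case using insert.hyps by simp
qed

lemma norm_sum_sq_le:
  fixes e :: "'a \<Rightarrow> 'v::real_inner"
  shows "(norm (\<Sum>i\<in>A. e i))\<^sup>2 \<le> real (card A) * (\<Sum>i\<in>A. (norm (e i))\<^sup>2)"
proof -
  have "(norm (\<Sum>i\<in>A. e i))\<^sup>2 = (\<Sum>j\<in>A. \<Sum>i\<in>A. e i \<bullet> e j)"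
    by (simp add: power2_norm_eq_inner inner_sum_left inner_sum_right)
  also have "\<dots> \<le> (\<Sum>j\<in>A. \<Sum>i\<in>A. ((norm (e i))\<^sup>2 + (norm (e j))\<^sup>2) / 2)"
  proof (intro sum_mono)
    fix j i
    have "0 \<le> (norm (e i - e j))\<^sup>2" by simp
    then show "e i \<bullet> e j \<le> ((norm (e i))\<^sup>2 + (norm (e j))\<^sup>2) / 2"
      by (simp add: norm_diff_sq)
  qed
  also have "\<dots> = real (card A) * (\<Sum>i\<in>A. (norm (e i))\<^sup>2)"
    by (simp add: sum.distrib add_divide_distrib sum_divide_distrib[symmetric] sum_distrib_left[symmetric])
  finally show ?thesis .
qed



lemma fin_qs: "finite (set_pmf (quant_scalar \<delta> b y))"
  unfolding quant_scalar_def Let_def by (auto intro: finite_subset[of _ "UNIV::bool set"])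

lemma qs_in:
  assumes d: "\<delta> > 0" and y1: "\<not> y < - (2 ^ (b - 1)) * \<delta>" and y2: "\<not> y > (2 ^ (b - 1) - 1) * \<delta>"
  shows "measure_pmf.expectation (quant_scalar \<delta> b y) (\<lambda>q. (q - y)\<^sup>2) \<le> \<delta>\<^sup>2 / 4"
proof -
  define z where "z = \<delta> * of_int \<lfloor>y / \<delta>\<rfloor>"
  define t where "t = y - z"
  have f1: "of_int \<lfloor>y / \<delta>\<rfloor> \<le> y / \<delta>" "y / \<delta> < of_int \<lfloor>y / \<delta>\<rfloor> + 1" by linarith+
  have t0: "0 \<le> t" using mult_left_mono[OF f1(1), of \<delta>] d by (simp add: t_def z_def)
  have t1: "t < \<delta>" using mult_strict_left_mono[OF f1(2) d] d by (simp add: t_def z_def distrib_left)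
  define p where "p = (z + \<delta> - y) / \<delta>"
  have p: "p = (\<delta> - t) / \<delta>" by (simp add: p_def t_def)
  have p0: "0 \<le> p" "p \<le> 1" using t0 t1 d by (auto simp: p)
  have "measure_pmf.expectation (quant_scalar \<delta> b y) (\<lambda>q. (q - y)\<^sup>2)
      = (z - y)\<^sup>2 * p + (z + \<delta> - y)\<^sup>2 * (1 - p)"
    using d y1 y2 p0 unfolding quant_scalar_def Let_def z_def[symmetric] p_def[symmetric] by simp
  also have "\<dots> = t * (\<delta> - t)"
    using d by (simp add: p t_def power2_eq_square field_simps)
  also have "\<dots> \<le> \<delta>\<^sup>2 / 4"
    using sum_squares_ge_zero[of "\<delta> - 2 * t" 0] by (simp add: power2_eq_square field_simps)
  finally show ?thesis .
qed

lemma qs_coord: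
  fixes y M lam \<delta> :: real
  assumes M: "M > 0" and yM: "\<bar>y\<bar> \<le> M" and lam: "0 < lam" "lam \<le> 1" and b: "b \<ge> 2"
    and dd: "\<delta> = lam * M / (2 ^ (b - 1) - 1)"
  shows "measure_pmf.expectation (quant_scalar \<delta> b y) (\<lambda>q. (q - y)\<^sup>2)
     \<le> \<delta>\<^sup>2 / 4 + (if y < - (2 ^ (b - 1)) * \<delta> \<or> y > (2 ^ (b - 1) - 1) * \<delta> then ((1 - lam) * M)\<^sup>2 else 0)"
proof -
  define K :: real where "K = 2 ^ (b - 1) - 1"
  have "(2::real) ^ (b - 1) \<ge> 2 ^ 1" using b by (intro power_increasing) auto
  hence K1: "K \<ge> 1" by (simp add: K_def)
  have dK: "\<delta> = lam * M / K" unfolding K_def by (rule dd)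
  have dpos: "\<delta> > 0" using dK M lam K1 by simp
  have Kd: "K * \<delta> = lam * M" using dK K1 by simp
  have two: "(2::real) ^ (b - 1) = K + 1" by (simp add: K_def)
  show ?thesis
  proof (cases "y < - (2 ^ (b - 1)) * \<delta>")
    case True
    have e: "measure_pmf.expectation (quant_scalar \<delta> b y) (\<lambda>q. (q - y)\<^sup>2) = (- (2 ^ (b - 1)) * \<delta> - y)\<^sup>2"
      using True dpos unfolding quant_scalar_def by simp
    have "0 \<le> - (2 ^ (b - 1)) * \<delta> - y" using True by simp
    moreover have "- (2 ^ (b - 1)) * \<delta> - y \<le> (1 - lam) * M"
      using yM Kd dpos unfolding two by (simp add: algebra_simps)
    ultimately have "(- (2 ^ (b - 1)) * \<delta> - y)\<^sup>2 \<le> ((1 - lam) * M)\<^sup>2" by (simp add: power_mono)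
    then show ?thesis using True e by (simp add: add_increasing)
  next
    case F1: False
    show ?thesis
    proof (cases "y > (2 ^ (b - 1) - 1) * \<delta>")
      case True
      have e: "measure_pmf.expectation (quant_scalar \<delta> b y) (\<lambda>q. (q - y)\<^sup>2) = ((2 ^ (b - 1) - 1) * \<delta> - y)\<^sup>2"
        using True F1 dpos unfolding quant_scalar_def by simp
      have "((2 ^ (b - 1) - 1) * \<delta> - y)\<^sup>2 = (y - K * \<delta>)\<^sup>2" by (simp add: K_def power2_commute)
      also have "\<dots> \<le> ((1 - lam) * M)\<^sup>2"
        using True yM Kd by (intro power_mono) (auto simp: K_def algebra_simps)
      finally show ?thesis using True e by (simp add: add_increasing)
    next
      case False
      then show ?thesis using qs_in[OF dpos F1 False] F1 by simp
    qed
  qed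
qed



lemma fin_qv: "finite (set_pmf (quant_vec \<delta> b (u::real^'d)))"
  unfolding quant_vec_def by (simp add: fin_Pi fin_qs)

lemma norm_sq_vec: "(norm (x::real^'d))\<^sup>2 = (\<Sum>j\<in>UNIV. (x $ j)\<^sup>2)"
  unfolding power2_norm_eq_inner inner_vec_def by (simp add: power2_eq_square)

lemma qv_exp:
  "measure_pmf.expectation (quant_vec \<delta> b (u::real^'d)) (\<lambda>q. (norm (q - u))\<^sup>2)
     = (\<Sum>j\<in>UNIV. measure_pmf.expectation (quant_scalar \<delta> b (u $ j)) (\<lambda>y. (y - u $ j)\<^sup>2))"
proof -
  have "measure_pmf.expectation (quant_vec \<delta> b u) (\<lambda>q. (norm (q - u))\<^sup>2)
     = measure_pmf.expectation (Pi_pmf UNIV 0 (\<lambda>j. quant_scalar \<delta> b (u $ j))) (\<lambda>q. \<Sum>j\<in>UNIV. (q j - u $ j)\<^sup>2)"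
    unfolding quant_vec_def by (simp add: norm_sq_vec)
  also have "\<dots> = (\<Sum>j\<in>UNIV. measure_pmf.expectation (Pi_pmf UNIV 0 (\<lambda>j. quant_scalar \<delta> b (u $ j))) (\<lambda>q. (q j - u $ j)\<^sup>2))"
    by (intro Bochner_Integration.integral_sum integrable_measure_pmf_finite fin_Pi fin_qs) auto
  also have "\<dots> = (\<Sum>j\<in>UNIV. measure_pmf.expectation (quant_scalar \<delta> b (u $ j)) (\<lambda>y. (y - u $ j)\<^sup>2))"
    by (intro sum.cong refl) (simp add: exp_component[where h = "\<lambda>y. (y - u $ _)\<^sup>2"])
  finally show ?thesis .
qed

lemma linf_props:
  fixes u :: "real^'d"
  shows "\<And>j. \<bar>u $ j\<bar> \<le> linf_norm u" "0 \<le> linf_norm u" "linf_norm u \<le> norm u"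
proof -
  show j: "\<And>j. \<bar>u $ j\<bar> \<le> linf_norm u" unfolding linf_norm_def by (intro Max_ge) auto
  show "0 \<le> linf_norm u" using j[of undefined] by linarith
  have "linf_norm u \<in> range (\<lambda>j. \<bar>u $ j\<bar>)" unfolding linf_norm_def by (intro Max_in) auto
  then obtain j where "linf_norm u = \<bar>u $ j\<bar>" by auto
  then show "linf_norm u \<le> norm u" by (simp add: component_le_norm_cart)
qed

lemma qv_bound:
  fixes u :: "real^'d"
  assumes lam: "0 < lam" "lam \<le> 1" and b: "b \<ge> 2" and dl: "dlam \<ge> 0"
    and cnt: "real (card {j. u $ j < - (2 ^ (b - 1)) * worker_delta lam b u
                     \<or> u $ j > (2 ^ (b - 1) - 1) * worker_delta lam b u}) \<le> dlam"
  shows "measure_pmf.expectation (quant_vec (worker_delta lam b u) b u) (\<lambda>q. (norm (q - u))\<^sup>2)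
     \<le> (real CARD('d) * lam\<^sup>2 / (4 * (2 ^ (b - 1) - 1)\<^sup>2) + dlam * (1 - lam)\<^sup>2) * (norm u)\<^sup>2"
proof -
  define M where "M = linf_norm u"
  define \<delta> where "\<delta> = worker_delta lam b u"
  define K :: real where "K = 2 ^ (b - 1) - 1"
  have "(2::real) ^ (b - 1) \<ge> 2 ^ 1" using b by (intro power_increasing) auto
  hence K1: "K \<ge> 1" by (simp add: K_def)
  have dK: "\<delta> = lam * M / K" by (simp add: \<delta>_def worker_delta_def M_def K_def)
  define S where "S = {j. u $ j < - (2 ^ (b - 1)) * \<delta> \<or> u $ j > (2 ^ (b - 1) - 1) * \<delta>}"
  have c0: "0 \<le> real CARD('d) * lam\<^sup>2 / (4 * K\<^sup>2) + dlam * (1 - lam)\<^sup>2" using dl by simp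
  have MP: "\<And>j. \<bar>u $ j\<bar> \<le> M" "0 \<le> M" "M \<le> norm u" using linf_props[of u] by (auto simp: M_def)
  show ?thesis
  proof (cases "M = 0")
    case True
    then have "u = 0" using MP(1) by (simp add: vec_eq_iff)
    then show ?thesis unfolding qv_exp by (simp add: quant_scalar_def worker_delta_def linf_norm_def)
  next
    case False
    with MP have Mp: "M > 0" by simp
    have "measure_pmf.expectation (quant_vec \<delta> b u) (\<lambda>q. (norm (q - u))\<^sup>2)
        \<le> (\<Sum>j\<in>UNIV. \<delta>\<^sup>2 / 4 + (if j \<in> S then ((1 - lam) * M)\<^sup>2 else 0))"
      unfolding qv_exp
    proof (intro sum_mono)
      fix j
      show "measure_pmf.expectation (quant_scalar \<delta> b (u $ j)) (\<lambda>y. (y - u $ j)\<^sup>2)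
         \<le> \<delta>\<^sup>2 / 4 + (if j \<in> S then ((1 - lam) * M)\<^sup>2 else 0)"
        using qs_coord[OF Mp MP(1) lam b, of \<delta>] dK unfolding S_def K_def by simp
    qed
    also have "\<dots> = real CARD('d) * (\<delta>\<^sup>2 / 4) + real (card S) * ((1 - lam) * M)\<^sup>2"
      by (simp add: sum.distrib sum.If_cases)
    also have "\<dots> \<le> real CARD('d) * (\<delta>\<^sup>2 / 4) + dlam * ((1 - lam) * M)\<^sup>2"
      using cnt unfolding S_def \<delta>_def by (intro add_left_mono mult_right_mono) auto
    also have "\<dots> = (real CARD('d) * lam\<^sup>2 / (4 * K\<^sup>2) + dlam * (1 - lam)\<^sup>2) * M\<^sup>2"
      using K1 by (simp add: dK power_divide power_mult_distrib field_simps power2_eq_square)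
    also have "\<dots> \<le> (real CARD('d) * lam\<^sup>2 / (4 * K\<^sup>2) + dlam * (1 - lam)\<^sup>2) * (norm u)\<^sup>2"
      using MP by (intro mult_left_mono c0 power_mono) auto
    finally show ?thesis by (simp add: \<delta>_def K_def)
  qed
qed



lemma exp_unif:
  fixes h :: "nat \<Rightarrow> 'c::{banach, second_countable_topology}"
  assumes "n \<ge> 1"
  shows "measure_pmf.expectation (pmf_of_set {..<n}) h = (1 / real n) *\<^sub>R (\<Sum>a<n. h a)"
proof -
  have "0 \<in> {..<n}" using assms by simp
  then have ne: "{..<n} \<noteq> {}" by blast
  show ?thesis
    by (subst integral_measure_pmf[of "{..<n}"]) (use ne in \<open>auto simp: scaleR_sum_right\<close>)
qed

theorem mainTheorem7:
  fixes f :: "nat \<Rightarrow> real^'d \<Rightarrow> real"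
    and g :: "nat \<Rightarrow> real^'d \<Rightarrow> real^'d"
    and n N B b :: nat and L lam dlam :: real and x xt :: "real^'d"
  assumes n_pos: "n \<ge> 1"
    and convex: "\<And>a. a < n \<Longrightarrow> convex_on UNIV (f a)"
    and grad: "\<And>a y. a < n \<Longrightarrow> (f a has_derivative (\<lambda>h. g a y \<bullet> h)) (at y)"
    and lip: "\<And>a y z. a < n \<Longrightarrow> norm (g a y - g a z) \<le> L * norm (y - z)"
    and N_pos: "N \<ge> 1" and B_pos: "B \<ge> 1" and b_ge: "b \<ge> 2"
    and lam: "0 < lam" "lam \<le> 1"
    and dlam_nonneg: "dlam \<ge> 0"
    and dlam: "\<And>I i. I \<in> set_pmf (idx_pmf n N B) \<Longrightarrow> i < N \<Longrightarrow>
        real (card {j. worker_u g B x xt I i $ j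
                         < - (2 ^ (b - 1)) * worker_delta lam b (worker_u g B x xt I i)
                     \<or> worker_u g B x xt I i $ j
                         > (2 ^ (b - 1) - 1) * worker_delta lam b (worker_u g B x xt I i)}) \<le> dlam"
  defines "F \<equiv> (\<lambda>y. (1 / real n) * (\<Sum>a<n. f a y))"
    and "gradF \<equiv> (\<lambda>y. (1 / real n) *\<^sub>R (\<Sum>a<n. g a y))"
    and "\<zeta> \<equiv> real CARD('d) * lam\<^sup>2 / (4 * (2 ^ (b - 1) - 1)\<^sup>2) + dlam * (1 - lam)\<^sup>2
              + 1 / (real N * real B)"
  shows "measure_pmf.expectation (v_pmf g n N B b lam x xt) (\<lambda>v. (norm (v - gradF x))\<^sup>2)
           \<le> 4 * L * \<zeta> * (F xt - F x - gradF x \<bullet> (xt - x))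
       \<and> measure_pmf.expectation (pair_pmf (v_pmf g n N B b lam x xt) (batch_pmf n B))
           (\<lambda>(v, J). (norm (vhat g n B x xt J - v))\<^sup>2)
           \<le> 4 * L * (1 / (2 * real B) + real CARD('d) * lam\<^sup>2 / (4 * (2 ^ (b - 1) - 1)\<^sup>2)
                     + dlam * (1 - lam)\<^sup>2 + 1 / (real N * real B))
             * (F xt - F x - gradF x \<bullet> (xt - x))"
proof -
  define \<Delta> where "\<Delta> = (\<lambda>a. g a x - g a xt)"
  define m where "m = gradF x - gradF xt"
  define S where "S = (1 / real n) * (\<Sum>a<n. (norm (\<Delta> a))\<^sup>2)"
  define D where "D = F xt - F x - gradF x \<bullet> (xt - x)"
  define c where "c = real CARD('d) * lam\<^sup>2 / (4 * (2 ^ (b - 1) - 1)\<^sup>2) + dlam * (1 - lam)\<^sup>2"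
  define U where "U = pmf_of_set {..<n}"
  have npos: "real n > 0" using n_pos by simp
  have Npos: "real N > 0" using N_pos by simp
  have Bpos: "real B > 0" using B_pos by simp
  have c0: "c \<ge> 0" using dlam_nonneg by (simp add: c_def)
  have zeta: "\<zeta> = c + 1 / (real N * real B)" by (simp add: \<zeta>_def c_def)
  have m_eq: "m = (1 / real n) *\<^sub>R (\<Sum>a<n. \<Delta> a)"
    by (simp add: m_def gradF_def \<Delta>_def sum_subtractf scaleR_diff_right)
  have SD: "S \<le> 2 * L * D"
  proof -
    have each: "(norm (\<Delta> a))\<^sup>2 \<le> 2 * L * (f a xt - f a x - g a x \<bullet> (xt - x))" if "a < n" for a
      unfolding \<Delta>_def by (rule cocoercive[OF convex[OF that] grad[OF that] lip[OF that]])
    have "D = (1 / real n) * (\<Sum>a<n. f a xt - f a x - g a x \<bullet> (xt - x))"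
      by (simp add: D_def F_def gradF_def sum_subtractf inner_sum_left right_diff_distrib)
    moreover have "(\<Sum>a<n. (norm (\<Delta> a))\<^sup>2) \<le> (\<Sum>a<n. 2 * L * (f a xt - f a x - g a x \<bullet> (xt - x)))"
      by (intro sum_mono each) auto
    ultimately show ?thesis using npos
      by (simp add: S_def sum_distrib_left[symmetric] divide_right_mono)
  qed
  have "0 \<in> {..<n}" using n_pos by simp
  then have neU: "{..<n} \<noteq> {}" by blast
  have finU: "finite (set_pmf U)" using neU by (simp add: U_def)
  have EU0: "measure_pmf.expectation U (\<lambda>a. \<Delta> a - m) = 0"
  proof -
    have s1: "(\<Sum>a<n. \<Delta> a - m) = (\<Sum>a<n. \<Delta> a) - real n *\<^sub>R m"
      by (subst sum_subtractf) (simp only: sum_constant_scaleR card_lessThan)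
    have "measure_pmf.expectation U (\<lambda>a. \<Delta> a - m) = (1 / real n) *\<^sub>R (\<Sum>a<n. \<Delta> a - m)"
      unfolding U_def by (rule exp_unif[OF n_pos])
    also have "\<dots> = m - m" unfolding s1 using npos by (simp add: scaleR_diff_right m_eq[symmetric])
    finally show ?thesis by simp
  qed
  have EUsq: "measure_pmf.expectation U (\<lambda>a. (norm (\<Delta> a - m))\<^sup>2) \<le> S"
  proof -
    have "measure_pmf.expectation U (\<lambda>a. (norm (\<Delta> a - m))\<^sup>2)
        = (1 / real n) * (\<Sum>a<n. (norm (\<Delta> a))\<^sup>2 - 2 * (\<Delta> a \<bullet> m) + (norm m)\<^sup>2)"
      using n_pos by (simp add: U_def exp_unif norm_diff_sq)
    also have "\<dots> = S - 2 * (((1 / real n) *\<^sub>R (\<Sum>a<n. \<Delta> a)) \<bullet> m) + (norm m)\<^sup>2"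
      using npos by (simp add: S_def sum.distrib sum_subtractf inner_sum_left right_diff_distrib distrib_left sum_distrib_left[symmetric])
    also have "\<dots> = S - (norm m)\<^sup>2" by (simp add: m_eq[symmetric] power2_norm_eq_inner)
    finally show ?thesis by simp
  qed
  have EUn: "measure_pmf.expectation U (\<lambda>a. (norm (\<Delta> a))\<^sup>2) = S"
    using n_pos by (simp add: U_def exp_unif S_def)
  define P where "P = {..<N} \<times> {..<B}"
  define u where "u = worker_u g B x xt"
  define W where "W = (\<lambda>I. (1 / real N) *\<^sub>R (\<Sum>i<N. u I i) - m)"
  have idx_eq: "idx_pmf n N B = Pi_pmf P 0 (\<lambda>_. U)" by (simp add: idx_pmf_def P_def U_def)
  have finP: "finite P" by (simp add: P_def)
  have finI: "finite (set_pmf (idx_pmf n N B))" unfolding idx_eq using finP finU by (intro fin_Pi) auto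
  have u_eq: "u I i = (1 / real B) *\<^sub>R (\<Sum>a<B. \<Delta> (I (i, a)))" for I i
    by (simp add: u_def worker_u_def \<Delta>_def)
  have Eu: "measure_pmf.expectation (idx_pmf n N B) (\<lambda>I. (norm (u I i))\<^sup>2) \<le> S" if iN: "i < N" for i
  proof -
    have "measure_pmf.expectation (idx_pmf n N B) (\<lambda>I. (norm (u I i))\<^sup>2)
        \<le> measure_pmf.expectation (idx_pmf n N B) (\<lambda>I. (1 / real B) * (\<Sum>a<B. (norm (\<Delta> (I (i, a))))\<^sup>2))"
    proof (rule exp_mono[OF finI])
      fix I
      have "(norm (u I i))\<^sup>2 = (1 / real B)\<^sup>2 * (norm (\<Sum>a<B. \<Delta> (I (i, a))))\<^sup>2"
        by (simp add: u_eq power_mult_distrib power_divide)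
      also have "\<dots> \<le> (1 / real B)\<^sup>2 * (real B * (\<Sum>a<B. (norm (\<Delta> (I (i, a))))\<^sup>2))"
        using norm_sum_sq_le[of "\<lambda>a. \<Delta> (I (i, a))" "{..<B}"] by (intro mult_left_mono) auto
      also have "\<dots> = (1 / real B) * (\<Sum>a<B. (norm (\<Delta> (I (i, a))))\<^sup>2)"
        using Bpos by (simp add: power2_eq_square)
      finally show "(norm (u I i))\<^sup>2 \<le> (1 / real B) * (\<Sum>a<B. (norm (\<Delta> (I (i, a))))\<^sup>2)" .
    qed
    also have "\<dots> = (1 / real B) * (\<Sum>a<B. measure_pmf.expectation (idx_pmf n N B) (\<lambda>I. (norm (\<Delta> (I (i, a))))\<^sup>2))"
      by (simp add: Bochner_Integration.integral_sum integrable_measure_pmf_finite[OF finI])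
    also have "\<dots> = (1 / real B) * (\<Sum>a<B. S)"
    proof -
      have "measure_pmf.expectation (idx_pmf n N B) (\<lambda>I. (norm (\<Delta> (I (i, a))))\<^sup>2) = S" if "a < B" for a
        unfolding idx_eq using that iN finP EUn
        by (subst exp_component[where h = "\<lambda>a. (norm (\<Delta> a))\<^sup>2"]) (auto simp: P_def)
      then show ?thesis by simp
    qed
    also have "\<dots> = S" using Bpos by simp
    finally show ?thesis .
  qed
  have EW: "measure_pmf.expectation (idx_pmf n N B) (\<lambda>I. (norm (W I))\<^sup>2) \<le> S / (real N * real B)"
  proof -
    have cardP: "card P = N * B" by (simp add: P_def card_cartesian_product)
    have W_eq: "W I = (1 / (real N * real B)) *\<^sub>R (\<Sum>k\<in>P. \<Delta> (I k) - m)" for I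
    proof -
      have "(\<Sum>i<N. u I i) = (1 / real B) *\<^sub>R (\<Sum>k\<in>P. \<Delta> (I k))"
        by (simp add: u_eq P_def scaleR_sum_right sum.cartesian_product)
      moreover have "(\<Sum>k\<in>P. \<Delta> (I k) - m) = (\<Sum>k\<in>P. \<Delta> (I k)) - (real N * real B) *\<^sub>R m"
        by (subst sum_subtractf) (simp only: sum_constant_scaleR cardP of_nat_mult)
      ultimately show ?thesis using Npos Bpos
        by (simp add: W_def scaleR_diff_right)
    qed
    have "measure_pmf.expectation (idx_pmf n N B) (\<lambda>I. (norm (W I))\<^sup>2)
        = (1 / (real N * real B))\<^sup>2 * measure_pmf.expectation (Pi_pmf P 0 (\<lambda>_. U)) (\<lambda>I. (norm (\<Sum>k\<in>P. \<Delta> (I k) - m))\<^sup>2)"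
      by (simp add: W_eq idx_eq power_mult_distrib power_divide)
    also have "\<dots> = (1 / (real N * real B))\<^sup>2 * (\<Sum>k\<in>P. measure_pmf.expectation U (\<lambda>a. (norm (\<Delta> a - m))\<^sup>2))"
      using indep_sum[OF finP, of "\<lambda>_. U" "\<lambda>_ a. \<Delta> a - m" 0] finU EU0 by simp
    also have "\<dots> \<le> (1 / (real N * real B))\<^sup>2 * (\<Sum>k\<in>P. S)"
      using EUsq by (intro mult_left_mono sum_mono) auto
    also have "\<dots> = S / (real N * real B)"
      using Npos Bpos by (simp add: cardP power2_eq_square)
    finally show ?thesis .
  qed
  define Q where "Q = (\<lambda>I. Pi_pmf {..<N} 0 (\<lambda>i. quant_vec (worker_delta lam b (u I i)) b (u I i)))"
  have finQ: "finite (set_pmf (Q I))" for I unfolding Q_def by (intro fin_Pi fin_qv) auto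
  have v_eq: "v_pmf g n N B b lam x xt = bind_pmf (idx_pmf n N B) (\<lambda>I. map_pmf (\<lambda>q. (1 / real N) *\<^sub>R (\<Sum>i<N. q i) + gradF xt) (Q I))"
    by (simp add: v_pmf_def Q_def u_def gradF_def)
  have finV: "finite (set_pmf (v_pmf g n N B b lam x xt))"
    unfolding v_eq using finI finQ by simp
  have inner: "measure_pmf.expectation (Q I) (\<lambda>q. (norm ((1 / real N) *\<^sub>R (\<Sum>i<N. q i) + gradF xt - gradF x))\<^sup>2)
      \<le> 2 * c * ((1 / real N) * (\<Sum>i<N. (norm (u I i))\<^sup>2)) + 2 * (norm (W I))\<^sup>2"
    if I: "I \<in> set_pmf (idx_pmf n N B)" for I
  proof -
    have "measure_pmf.expectation (Q I) (\<lambda>q. (norm ((1 / real N) *\<^sub>R (\<Sum>i<N. q i) + gradF xt - gradF x))\<^sup>2)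
       \<le> measure_pmf.expectation (Q I) (\<lambda>q. 2 * ((1 / real N) * (\<Sum>i<N. (norm (q i - u I i))\<^sup>2)) + 2 * (norm (W I))\<^sup>2)"
    proof (rule exp_mono[OF finQ])
      fix q :: "nat \<Rightarrow> real^'d"
      have e: "(1 / real N) *\<^sub>R (\<Sum>i<N. q i) + gradF xt - gradF x = (1 / real N) *\<^sub>R (\<Sum>i<N. q i - u I i) + W I"
        by (simp add: W_def m_def sum_subtractf scaleR_diff_right algebra_simps)
      have p: "(norm (a + bb))\<^sup>2 \<le> 2 * (norm a)\<^sup>2 + 2 * (norm bb)\<^sup>2" for a bb :: "real^'d"
        using norm_add_sq[of a bb] norm_diff_sq[of a bb] zero_le_power2[of "norm (a - bb)"] by linarith
      have j: "(norm ((1 / real N) *\<^sub>R (\<Sum>i<N. q i - u I i)))\<^sup>2 \<le> (1 / real N) * (\<Sum>i<N. (norm (q i - u I i))\<^sup>2)"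
      proof -
        have "(norm ((1 / real N) *\<^sub>R (\<Sum>i<N. q i - u I i)))\<^sup>2 = (1 / real N)\<^sup>2 * (norm (\<Sum>i<N. q i - u I i))\<^sup>2"
          by (simp add: power_mult_distrib power_divide)
        also have "\<dots> \<le> (1 / real N)\<^sup>2 * (real N * (\<Sum>i<N. (norm (q i - u I i))\<^sup>2))"
          using norm_sum_sq_le[of "\<lambda>i. q i - u I i" "{..<N}"] by (intro mult_left_mono) auto
        also have "\<dots> = (1 / real N) * (\<Sum>i<N. (norm (q i - u I i))\<^sup>2)"
          using Npos by (simp add: power2_eq_square)
        finally show ?thesis .
      qed
      show "(norm ((1 / real N) *\<^sub>R (\<Sum>i<N. q i) + gradF xt - gradF x))\<^sup>2
          \<le> 2 * ((1 / real N) * (\<Sum>i<N. (norm (q i - u I i))\<^sup>2)) + 2 * (norm (W I))\<^sup>2"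
        unfolding e using p[of "(1 / real N) *\<^sub>R (\<Sum>i<N. q i - u I i)" "W I"] j by linarith
    qed
    also have "\<dots> = 2 * ((1 / real N) * (\<Sum>i<N. measure_pmf.expectation (Q I) (\<lambda>q. (norm (q i - u I i))\<^sup>2))) + 2 * (norm (W I))\<^sup>2"
      by (simp add: Bochner_Integration.integral_sum integrable_measure_pmf_finite[OF finQ])
    also have "\<dots> \<le> 2 * ((1 / real N) * (\<Sum>i<N. c * (norm (u I i))\<^sup>2)) + 2 * (norm (W I))\<^sup>2"
    proof -
      have "measure_pmf.expectation (Q I) (\<lambda>q. (norm (q i - u I i))\<^sup>2) \<le> c * (norm (u I i))\<^sup>2" if iN: "i < N" for i
      proof -
        have "measure_pmf.expectation (Q I) (\<lambda>q. (norm (q i - u I i))\<^sup>2)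
            = measure_pmf.expectation (quant_vec (worker_delta lam b (u I i)) b (u I i)) (\<lambda>q. (norm (q - u I i))\<^sup>2)"
          unfolding Q_def using iN by (subst exp_component[where h = "\<lambda>q. (norm (q - u I i))\<^sup>2"]) auto
        also have "\<dots> \<le> c * (norm (u I i))\<^sup>2"
          unfolding c_def by (rule qv_bound[OF lam b_ge dlam_nonneg dlam[OF I iN, folded u_def]])
        finally show ?thesis .
      qed
      then show ?thesis using Npos by (intro add_right_mono mult_left_mono sum_mono) auto
    qed
    also have "\<dots> = 2 * c * ((1 / real N) * (\<Sum>i<N. (norm (u I i))\<^sup>2)) + 2 * (norm (W I))\<^sup>2"
      by (simp add: sum_distrib_left[symmetric])
    finally show ?thesis .
  qed
  have part1: "measure_pmf.expectation (v_pmf g n N B b lam x xt) (\<lambda>v. (norm (v - gradF x))\<^sup>2) \<le> 2 * (c + 1 / (real N * real B)) * S"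
  proof -
    have "measure_pmf.expectation (v_pmf g n N B b lam x xt) (\<lambda>v. (norm (v - gradF x))\<^sup>2)
        = measure_pmf.expectation (idx_pmf n N B) (\<lambda>I. measure_pmf.expectation (Q I) (\<lambda>q. (norm ((1 / real N) *\<^sub>R (\<Sum>i<N. q i) + gradF xt - gradF x))\<^sup>2))"
      unfolding v_eq by (subst exp_bind[OF finI]) (simp_all add: finQ)
    also have "\<dots> \<le> measure_pmf.expectation (idx_pmf n N B) (\<lambda>I. 2 * c * ((1 / real N) * (\<Sum>i<N. (norm (u I i))\<^sup>2)) + 2 * (norm (W I))\<^sup>2)"
      by (rule exp_mono[OF finI inner])
    also have "\<dots> = 2 * c * ((1 / real N) * (\<Sum>i<N. measure_pmf.expectation (idx_pmf n N B) (\<lambda>I. (norm (u I i))\<^sup>2)))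
                 + 2 * measure_pmf.expectation (idx_pmf n N B) (\<lambda>I. (norm (W I))\<^sup>2)"
      by (simp add: Bochner_Integration.integral_sum integrable_measure_pmf_finite[OF finI])
    also have "\<dots> \<le> 2 * c * ((1 / real N) * (\<Sum>i<N. S)) + 2 * (S / (real N * real B))"
      using Eu EW c0 Npos by (intro add_mono mult_left_mono sum_mono) auto
    also have "\<dots> = 2 * (c + 1 / (real N * real B)) * S" using Npos by (simp add: field_simps)
    finally show ?thesis .
  qed
  define J where "J = batch_pmf n B"
  have J_eq: "J = Pi_pmf {..<B} 0 (\<lambda>_. U)" by (simp add: J_def batch_pmf_def U_def)
  have finJ: "finite (set_pmf J)" unfolding J_eq using finU by (intro fin_Pi) auto
  have inner2: "measure_pmf.expectation J (\<lambda>j. (norm (vhat g n B x xt j - v))\<^sup>2) \<le> S / real B + (norm (v - gradF x))\<^sup>2"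
    for v
  proof -
    define A where "A = (\<lambda>j::nat \<Rightarrow> nat. (1 / real B) *\<^sub>R (\<Sum>a<B. \<Delta> (j a) - m))"
    define w where "w = v - gradF x"
    have sB: "(\<Sum>a<B. \<Delta> (j a) - m) = (\<Sum>a<B. \<Delta> (j a)) - real B *\<^sub>R m" for j :: "nat \<Rightarrow> nat"
      by (subst sum_subtractf) (simp only: sum_constant_scaleR card_lessThan)
    have ve: "vhat g n B x xt j - v = A j - w" for j
      unfolding A_def w_def sB using Bpos
      by (simp add: vhat_def \<Delta>_def gradF_def m_def scaleR_diff_right algebra_simps)
    have EA: "measure_pmf.expectation J A = 0"
    proof -
      have "measure_pmf.expectation J A = (1 / real B) *\<^sub>R (\<Sum>a<B. measure_pmf.expectation J (\<lambda>j. \<Delta> (j a) - m))"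
        unfolding A_def by (simp add: Bochner_Integration.integral_sum integrable_measure_pmf_finite[OF finJ])
      also have "\<dots> = 0"
      proof -
        have "measure_pmf.expectation J (\<lambda>j. \<Delta> (j a) - m) = 0" if "a < B" for a
          unfolding J_eq using that EU0 by (subst exp_component[where h = "\<lambda>a. \<Delta> a - m"]) auto
        then show ?thesis by simp
      qed
      finally show ?thesis .
    qed
    have EA2: "measure_pmf.expectation J (\<lambda>j. (norm (A j))\<^sup>2) \<le> S / real B"
    proof -
      have "measure_pmf.expectation J (\<lambda>j. (norm (A j))\<^sup>2)
          = (1 / real B)\<^sup>2 * measure_pmf.expectation (Pi_pmf {..<B} 0 (\<lambda>_. U)) (\<lambda>j. (norm (\<Sum>a<B. \<Delta> (j a) - m))\<^sup>2)"
        by (simp add: A_def J_eq power_mult_distrib power_divide)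
      also have "\<dots> = (1 / real B)\<^sup>2 * (\<Sum>a<B. measure_pmf.expectation U (\<lambda>a. (norm (\<Delta> a - m))\<^sup>2))"
        using indep_sum[of "{..<B}" "\<lambda>_. U" "\<lambda>_ a. \<Delta> a - m" 0] finU EU0 by simp
      also have "\<dots> \<le> (1 / real B)\<^sup>2 * (\<Sum>a<B. S)"
        using EUsq by (intro mult_left_mono sum_mono) auto
      also have "\<dots> = S / real B" using Bpos by (simp add: power2_eq_square)
      finally show ?thesis .
    qed
    have "measure_pmf.expectation J (\<lambda>j. (norm (vhat g n B x xt j - v))\<^sup>2)
        = measure_pmf.expectation J (\<lambda>j. (norm (A j))\<^sup>2 - 2 * (A j \<bullet> w) + (norm w)\<^sup>2)"
      by (simp add: ve norm_diff_sq)
    also have "\<dots> = measure_pmf.expectation J (\<lambda>j. (norm (A j))\<^sup>2) - 2 * (measure_pmf.expectation J A \<bullet> w) + (norm w)\<^sup>2"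
      by (simp add: Bochner_Integration.integral_add Bochner_Integration.integral_diff integrable_measure_pmf_finite[OF finJ])
    also have "\<dots> \<le> S / real B + (norm w)\<^sup>2" using EA EA2 by simp
    finally show ?thesis by (simp add: w_def)
  qed
  have part2: "measure_pmf.expectation (pair_pmf (v_pmf g n N B b lam x xt) (batch_pmf n B))
           (\<lambda>(v, J). (norm (vhat g n B x xt J - v))\<^sup>2) \<le> S / real B + 2 * (c + 1 / (real N * real B)) * S"
  proof -
    have "measure_pmf.expectation (pair_pmf (v_pmf g n N B b lam x xt) (batch_pmf n B))
           (\<lambda>(v, J). (norm (vhat g n B x xt J - v))\<^sup>2)
        = measure_pmf.expectation (v_pmf g n N B b lam x xt) (\<lambda>v. measure_pmf.expectation J (\<lambda>j. (norm (vhat g n B x xt j - v))\<^sup>2))"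
      using finV finJ by (simp add: exp_pair J_def)
    also have "\<dots> \<le> measure_pmf.expectation (v_pmf g n N B b lam x xt) (\<lambda>v. S / real B + (norm (v - gradF x))\<^sup>2)"
      by (rule exp_mono[OF finV inner2])
    also have "\<dots> = S / real B + measure_pmf.expectation (v_pmf g n N B b lam x xt) (\<lambda>v. (norm (v - gradF x))\<^sup>2)"
      by (simp add: Bochner_Integration.integral_add integrable_measure_pmf_finite[OF finV])
    also have "\<dots> \<le> S / real B + 2 * (c + 1 / (real N * real B)) * S"
      using part1 by simp
    finally show ?thesis .
  qed
  have z0: "0 \<le> c + 1 / (real N * real B)" using c0 Npos Bpos by simp
  have fin1: "2 * (c + 1 / (real N * real B)) * S \<le> 4 * L * \<zeta> * D"
  proof -
    have "2 * (c + 1 / (real N * real B)) * S \<le> 2 * (c + 1 / (real N * real B)) * (2 * L * D)"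
      using SD z0 by (intro mult_left_mono) auto
    then show ?thesis by (simp add: zeta algebra_simps)
  qed
  have fin2: "S / real B \<le> 2 * L * D / real B" using SD Bpos by (simp add: divide_right_mono)
  show ?thesis
  proof
    show "measure_pmf.expectation (v_pmf g n N B b lam x xt) (\<lambda>v. (norm (v - gradF x))\<^sup>2)
           \<le> 4 * L * \<zeta> * (F xt - F x - gradF x \<bullet> (xt - x))"
      using part1 fin1 by (simp add: D_def)
  next
    have "4 * L * (1 / (2 * real B) + real CARD('d) * lam\<^sup>2 / (4 * (2 ^ (b - 1) - 1)\<^sup>2)
                     + dlam * (1 - lam)\<^sup>2 + 1 / (real N * real B)) * D
        = 2 * L * D / real B + 4 * L * \<zeta> * D"
      using Bpos by (simp add: zeta c_def field_simps)
    then show "measure_pmf.expectation (pair_pmf (v_pmf g n N B b lam x xt) (batch_pmf n B))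
           (\<lambda>(v, J). (norm (vhat g n B x xt J - v))\<^sup>2)
           \<le> 4 * L * (1 / (2 * real B) + real CARD('d) * lam\<^sup>2 / (4 * (2 ^ (b - 1) - 1)\<^sup>2)
                     + dlam * (1 - lam)\<^sup>2 + 1 / (real N * real B))
             * (F xt - F x - gradF x \<bullet> (xt - x))"
      using part2 fin1 fin2 unfolding D_def by linarith
  qed
qed

end
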